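(* For $n\in\mathbb{N}^\star$ let $\phi_n(x)=\int_0^\pi e^{-2x\sin\eta}e^{2in\eta}\,\mathrm{d}\eta$. Then for every $x>0$ and $n\ge1$, $$\frac12\,\frac{(2n+1)x}{(n^2+x^2)\big((n+1)^2+x^2\big)}\le\phi_n(x)-\phi_{n+1}(x)\le4\,\frac{(2n+1)x}{(n^2+x^2)\big((n+1)^2+x^2\big)}.$$ *)

theory Defs
  imports "HOL-Analysis.Analysis"
begin

definition phi :: "nat \<Rightarrow> real \<Rightarrow> complex" where
  "phi n x = integral {0..pi} (\<lambda>\<eta>. exp (complex_of_real (-2 * x * sin \<eta>)) * exp (\<i> * of_real (2 * real n * \<eta>)))"

end

theory Submission
  imports Defs
begin


definition cc :: "nat \<Rightarrow> real \<Rightarrow> real" where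
  "cc k x = integral {0..pi} (\<lambda>t. exp (-2 * x * sin t) * cos (2 * real k * t))"
definition c1 :: "nat \<Rightarrow> real \<Rightarrow> real" where
  "c1 k x = integral {0..pi} (\<lambda>t. -2 * sin t * exp (-2 * x * sin t) * cos (2 * real k * t))"
definition c2 :: "nat \<Rightarrow> real \<Rightarrow> real" where
  "c2 k x = integral {0..pi} (\<lambda>t. 4 * (sin t)^2 * exp (-2 * x * sin t) * cos (2 * real k * t))"

lemma cc_deriv: "(cc k has_real_derivative c1 k x) (at x)"
proof -
  have "((\<lambda>x. integral (cbox 0 pi) (\<lambda>t. exp (-2 * x * sin t) * cos (2 * real k * t))) has_field_derivative
     integral (cbox 0 pi) (\<lambda>t. -2 * sin t * exp (-2 * x * sin t) * cos (2 * real k * t))) (at x within UNIV)"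
    by (rule leibniz_rule_field_derivative)
       (auto intro!: derivative_eq_intros integrable_continuous_interval continuous_intros simp: split_beta)
  then show ?thesis unfolding cc_def c1_def by simp
qed

lemma c1_deriv: "(c1 k has_real_derivative c2 k x) (at x)"
proof -
  have "((\<lambda>x. integral (cbox 0 pi) (\<lambda>t. -2 * sin t * exp (-2 * x * sin t) * cos (2 * real k * t))) has_field_derivative
     integral (cbox 0 pi) (\<lambda>t. 4 * (sin t)^2 * exp (-2 * x * sin t) * cos (2 * real k * t))) (at x within UNIV)"
    by (rule leibniz_rule_field_derivative)
       (auto intro!: derivative_eq_intros integrable_continuous_interval continuous_intros simp: split_beta power2_eq_square)
  then show ?thesis unfolding c2_def c1_def by simp
qed

lemma int_cc: "((\<lambda>t. exp (-2 * x * sin t) * cos (2 * real k * t)) has_integral cc k x) {0..pi}"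
  unfolding cc_def by (intro integrable_integral integrable_continuous_interval continuous_intros)
lemma int_c1: "((\<lambda>t. -2 * sin t * exp (-2 * x * sin t) * cos (2 * real k * t)) has_integral c1 k x) {0..pi}"
  unfolding c1_def by (intro integrable_integral integrable_continuous_interval continuous_intros)
lemma int_c2: "((\<lambda>t. 4 * (sin t)^2 * exp (-2 * x * sin t) * cos (2 * real k * t)) has_integral c2 k x) {0..pi}"
  unfolding c2_def by (intro integrable_integral integrable_continuous_interval continuous_intros)

lemma ode: "x^2 * c2 k x + x * c1 k x - 4*(x^2 + (real k)^2) * cc k x = -4*x"
proof -
  define g where "g t = x^2 * (4 * (sin t)^2 * exp (-2 * x * sin t) * cos (2 * real k * t))
     + x * (-2 * sin t * exp (-2 * x * sin t) * cos (2 * real k * t))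
     - 4*(x^2 + (real k)^2) * (exp (-2 * x * sin t) * cos (2 * real k * t))" for t
  have h1: "(g has_integral (x^2 * c2 k x + x * c1 k x - 4*(x^2 + (real k)^2) * cc k x)) {0..pi}"
    unfolding g_def
    by (intro has_integral_diff has_integral_add has_integral_mult_right int_cc int_c1 int_c2)
  define V where "V t = 2 * x * cos t * exp (-2 * x * sin t) * cos (2 * real k * t)
     - 2 * real k * exp (-2 * x * sin t) * sin (2 * real k * t)" for t
  have d: "(V has_vector_derivative g t) (at t within {0..pi})" for t
  proof -
    have e1: "g t = -2*x * sin t * exp (-2 * x * sin t)*cos (2 * real k * t) - 4*x^2*(cos t)^2*exp (-2 * x * sin t)*cos (2 * real k * t)
       - 4*(real k)^2*exp (-2 * x * sin t)*cos (2 * real k * t)"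
      by (simp add: g_def cos_squared_eq algebra_simps)
    have "(V has_real_derivative (-2*x * sin t * exp (-2 * x * sin t)*cos (2 * real k * t) - 4*x^2*(cos t)^2*exp (-2 * x * sin t)*cos (2 * real k * t)
       - 4*(real k)^2*exp (-2 * x * sin t)*cos (2 * real k * t))) (at t)"
      unfolding V_def
      apply (rule derivative_eq_intros refl | simp)+
      apply (simp add: algebra_simps power2_eq_square)
      done
    then have "(V has_real_derivative g t) (at t)" using e1 by simp
    then show ?thesis by (simp add: has_real_derivative_iff_has_vector_derivative has_vector_derivative_at_within)
  qed
  have h2: "(g has_integral (V pi - V 0)) {0..pi}"
    by (rule fundamental_theorem_of_calculus) (auto intro: d)
  have "V pi - V 0 = -4 * x"
  proof -
    have "cos (2 * real k * pi) = 1" using cos_npi[of "2*k"] by (simp add: mult.assoc)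
    moreover have "sin (2 * real k * pi) = 0" using sin_npi[of "2*k"] by (simp add: mult.assoc)
    ultimately show ?thesis unfolding V_def by simp
  qed
  then show ?thesis using h1 h2 has_integral_unique by metis
qed



lemma cc_zero: "k \<ge> 1 \<Longrightarrow> cc k 0 = 0"
proof -
  assume k: "k \<ge> 1"
  have "((\<lambda>t. cos (2 * real k * t)) has_integral ((\<lambda>t. sin (2 * real k * t) / (2 * real k)) pi - (\<lambda>t. sin (2 * real k * t) / (2 * real k)) 0)) {0..pi}"
  proof (rule fundamental_theorem_of_calculus)
    fix t :: real
    have "((\<lambda>t. sin (2 * real k * t) / (2 * real k)) has_real_derivative cos (2 * real k * t)) (at t)"
      using k apply -
      apply (rule derivative_eq_intros refl | simp)+
      done
    then show "((\<lambda>t. sin (2 * real k * t) / (2 * real k)) has_vector_derivative cos (2 * real k * t)) (at t within {0..pi})"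
      by (simp add: has_real_derivative_iff_has_vector_derivative has_vector_derivative_at_within)
  qed simp
  moreover have "sin (2 * real k * pi) = 0" using sin_npi[of "2*k"] by (simp add: mult.assoc)
  ultimately have "((\<lambda>t. cos (2 * real k * t)) has_integral 0) {0..pi}" by simp
  then show ?thesis unfolding cc_def by (simp add: integral_unique)
qed

lemma cc_lim0: "k \<ge> 1 \<Longrightarrow> (cc k \<longlongrightarrow> 0) (at_right 0)"
proof -
  assume k: "k \<ge> 1"
  have "isCont (cc k) 0" using cc_deriv DERIV_isCont by blast
  then have "(cc k \<longlongrightarrow> cc k 0) (at 0)" by (simp add: isCont_def)
  then have "(cc k \<longlongrightarrow> 0) (at 0)" using cc_zero[OF k] by simp
  then show ?thesis using filterlim_at_split by blast
qed

lemma cc_bound: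
  assumes x: "x > 0"
  shows "\<bar>cc k x\<bar> \<le> 1/x + pi/(2*x)"
proof -
  define E where "E t = exp (-2 * x * sin t)" for t
  have cE: "continuous_on {0..pi} E" unfolding E_def by (intro continuous_intros)
  have iE: "(E has_integral integral {0..pi} E) {0..pi}"
    using cE by (intro integrable_integral integrable_continuous_interval)
  have "\<bar>cc k x\<bar> \<le> integral {0..pi} E"
  proof -
  have "norm (integral {0..pi} (\<lambda>t. exp (-2 * x * sin t) * cos (2 * real k * t))) \<le> integral {0..pi} E"
  proof (rule integral_norm_bound_integral)
    show "(\<lambda>t. exp (-2 * x * sin t) * cos (2 * real k * t)) integrable_on {0..pi}"
      by (intro integrable_continuous_interval continuous_intros)
    show "E integrable_on {0..pi}" using iE by blast
    fix t show "norm (exp (-2 * x * sin t) * cos (2 * real k * t)) \<le> E t"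
      by (simp add: E_def abs_mult)
  qed
  then show ?thesis unfolding cc_def by simp
  qed
  define W where "W t = exp (-2 * x * sin t) * cos t" for t
  have dW: "(W has_vector_derivative (-2 * x * (cos t)^2 * E t - sin t * E t)) (at t within {0..pi})" for t
  proof -
    have "(W has_real_derivative (-2 * x * (cos t)^2 * E t - sin t * E t)) (at t)"
      unfolding W_def E_def
      apply (rule derivative_eq_intros refl | simp)+
      apply (simp add: algebra_simps power2_eq_square)
      done
    then show ?thesis by (simp add: has_real_derivative_iff_has_vector_derivative has_vector_derivative_at_within)
  qed
  have hW: "((\<lambda>t. -2 * x * (cos t)^2 * E t - sin t * E t) has_integral (W pi - W 0)) {0..pi}"
    apply (rule fundamental_theorem_of_calculus) apply simp apply (intro ballI dW) done
  have "W pi - W 0 = -2" by (simp add: W_def)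
  define I1 where "I1 = integral {0..pi} (\<lambda>t. (cos t)^2 * E t)"
  define I2 where "I2 = integral {0..pi} (\<lambda>t. sin t * E t)"
  have h1: "((\<lambda>t. (cos t)^2 * E t) has_integral I1) {0..pi}"
    unfolding I1_def by (intro integrable_integral integrable_continuous_interval continuous_intros cE)
  have h2: "((\<lambda>t. sin t * E t) has_integral I2) {0..pi}"
    unfolding I2_def by (intro integrable_integral integrable_continuous_interval continuous_intros cE)
  have "((\<lambda>t. -2 * x * (cos t)^2 * E t - sin t * E t) has_integral (-2 * x * I1 - I2)) {0..pi}"
    using has_integral_diff[OF has_integral_mult_right[OF h1, of "-2*x"] h2] by (simp add: algebra_simps)
  then have eq: "-2 * x * I1 - I2 = -2" using hW \<open>W pi - W 0 = -2\<close> has_integral_unique by metis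
  have I2pos: "I2 \<ge> 0"
    by (rule has_integral_nonneg[OF h2]) (auto simp: E_def sin_ge_zero)
  have I2le: "I2 \<le> pi / (2*x)"
  proof -
    have "I2 \<le> integral {0..pi} (\<lambda>t. 1 / (2*x))"
      unfolding I2_def
    proof (rule integral_le)
      show "(\<lambda>t. sin t * E t) integrable_on {0..pi}" using h2 by blast
      show "(\<lambda>t. 1 / (2*x)) integrable_on {0..pi}" by (rule integrable_const_ivl)
      fix t assume t: "t \<in> {0..pi}"
      have "1 + 2 * x * sin t \<le> exp (2 * x * sin t)" by (rule exp_ge_add_one_self)
      then have "2 * x * sin t \<le> exp (2 * x * sin t)" by linarith
      then have "2 * x * sin t * exp (-2 * x * sin t) \<le> 1"
        by (simp add: exp_minus field_simps)
      then show "sin t * E t \<le> 1 / (2*x)" using x by (simp add: E_def field_simps)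
    qed
    also have "\<dots> = pi / (2*x)" by simp
    finally show ?thesis .
  qed
  have "integral {0..pi} E \<le> I1 + I2"
  proof -
    have "integral {0..pi} E \<le> integral {0..pi} (\<lambda>t. (cos t)^2 * E t + sin t * E t)"
    proof (rule integral_le)
      show "E integrable_on {0..pi}" using iE by blast
      show "(\<lambda>t. (cos t)^2 * E t + sin t * E t) integrable_on {0..pi}" using has_integral_add[OF h1 h2] by blast
      fix t assume t: "t \<in> {0..pi}"
      have s0: "0 \<le> sin t" "sin t \<le> 1" using t sin_ge_zero by auto
      have "(sin t)^2 \<le> sin t" using s0 by (simp add: power2_eq_square mult_left_le)
      then have "E t = (cos t)^2 * E t + (sin t)^2 * E t" by (simp add: ring_distribs[symmetric] sin_cos_squared_add3 algebra_simps)
      also have "\<dots> \<le> (cos t)^2 * E t + sin t * E t"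
        using \<open>(sin t)^2 \<le> sin t\<close> by (simp add: E_def mult_right_mono)
      finally show "E t \<le> (cos t)^2 * E t + sin t * E t" .
    qed
    also have "\<dots> = I1 + I2" using has_integral_add[OF h1 h2] integral_unique by blast
    finally show ?thesis .
  qed
  moreover have "I1 \<le> 1/x" using eq I2pos x by (simp add: field_simps)
  ultimately show ?thesis using \<open>\<bar>cc k x\<bar> \<le> integral {0..pi} E\<close> I2le by linarith
qed

lemma cc_liminf: "(cc k \<longlongrightarrow> 0) at_top"
proof (rule Lim_null_comparison)
  show "\<forall>\<^sub>F x in at_top. norm (cc k x) \<le> (1 + pi/2) * inverse x"
    using eventually_gt_at_top[of 0]
  proof eventually_elim
    case (elim x)
    have "1/x + pi/(2*x) = (1 + pi/2) * inverse x" using elim by (simp add: field_simps)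
    then show ?case using cc_bound[OF elim, of k] by simp
  qed
  have "((\<lambda>x::real. inverse x) \<longlongrightarrow> 0) at_top" by (rule tendsto_inverse_0_at_top[OF filterlim_ident])
  then show "((\<lambda>x. (1 + pi/2) * inverse x) \<longlongrightarrow> 0) at_top" by (rule tendsto_mult_right_zero)
qed



lemma sin_int_zero: "((\<lambda>t. exp (-2 * x * sin t) * sin (2 * real k * t)) has_integral 0) {0..pi}"
proof -
  define f where "f = (\<lambda>t. exp (-2 * x * sin t) * sin (2 * real k * t))"
  define J where "J = integral {0..pi} f"
  have h: "(f has_integral J) (cbox 0 pi)"
    unfolding J_def f_def by (simp, intro integrable_integral integrable_continuous_interval continuous_intros)
  have c1: "cos (2 * real k * pi) = 1" using cos_npi[of "2*k"] by (simp add: mult.assoc)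
  have s1: "sin (2 * real k * pi) = 0" using sin_npi[of "2*k"] by (simp add: mult.assoc)
  have img: "(\<lambda>x. (1 / (-1::real)) *\<^sub>R x + - ((1 / (-1)) *\<^sub>R pi)) ` cbox 0 pi = {0..pi}"
    using image_affinity_atLeastAtMost[of "-1" pi 0 pi] by simp
  have "((\<lambda>x. f ((-1) *\<^sub>R x + pi)) has_integral (1 / (\<bar>-1\<bar> ^ DIM(real))) *\<^sub>R J) ((\<lambda>x. (1 / (-1::real)) *\<^sub>R x + - ((1 / (-1)) *\<^sub>R pi)) ` cbox 0 pi)"
        by (rule has_integral_affinity[OF h]) simp
  moreover have e1: "(\<lambda>x. f ((-1) *\<^sub>R x + pi)) = (\<lambda>x. f (pi - x))" by (simp add: fun_eq_iff)
  moreover have e2: "(1 / (\<bar>-1\<bar> ^ DIM(real))) *\<^sub>R J = J" by simp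
  ultimately have "((\<lambda>x. f (pi - x)) has_integral J) {0..pi}" using img by (simp only:)
  moreover have "f (pi - t) = - f t" for t
  proof -
    have "sin (2 * real k * (pi - t)) = sin (2 * real k * pi - 2 * real k * t)" by (simp add: algebra_simps)
    also have "\<dots> = - sin (2 * real k * t)" by (simp add: sin_diff c1 s1)
    finally show ?thesis by (simp add: f_def)
  qed
  ultimately have "((\<lambda>x. - f x) has_integral J) {0..pi}" by simp
  then have "(f has_integral -J) {0..pi}" using has_integral_neg[of "\<lambda>x. - f x" J "{0..pi}"] by simp
  moreover have "(f has_integral J) {0..pi}" using h by simp
  ultimately have "-J = J" by (rule has_integral_unique)
  then have "J = 0" by linarith
  then show ?thesis using h by (simp add: f_def)
qed
lemma exp_split: "exp (complex_of_real a) * exp (\<i> * complex_of_real b) = complex_of_real (exp a * cos b) + \<i> * complex_of_real (exp a * sin b)"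
  by (simp add: complex_eq_iff Re_exp Im_exp)

lemma phi_eq: "phi k x = complex_of_real (cc k x)"
proof -
  have hc: "((\<lambda>t. exp (-2 * x * sin t) * cos (2 * real k * t)) has_integral cc k x) {0..pi}" by (rule int_cc)
  have hs: "((\<lambda>t. exp (-2 * x * sin t) * sin (2 * real k * t)) has_integral 0) {0..pi}" by (rule sin_int_zero)
  have a: "((\<lambda>t. complex_of_real (exp (-2 * x * sin t) * cos (2 * real k * t))) has_integral complex_of_real (cc k x)) {0..pi}"
    using has_integral_linear[OF hc bounded_linear_of_real] unfolding o_def .
  have b: "((\<lambda>t. \<i> * complex_of_real (exp (-2 * x * sin t) * sin (2 * real k * t))) has_integral 0) {0..pi}"
    using has_integral_mult_right[OF has_integral_linear[OF hs bounded_linear_of_real], of \<i>] unfolding o_def by simp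
  have "((\<lambda>t. exp (complex_of_real (-2 * x * sin t)) * exp (\<i> * of_real (2 * real k * t))) has_integral complex_of_real (cc k x)) {0..pi}"
    unfolding exp_split using has_integral_add[OF a b] by simp
  then show ?thesis unfolding phi_def by (rule integral_unique)
qed



lemma max_principle:
  fixes w wd wdd p :: "real \<Rightarrow> real"
  assumes d1: "\<And>x. x > 0 \<Longrightarrow> (w has_real_derivative wd x) (at x)"
      and d2: "\<And>x. x > 0 \<Longrightarrow> (wd has_real_derivative wdd x) (at x)"
      and L: "\<And>x. x > 0 \<Longrightarrow> x^2 * wdd x + x * wd x - p x * w x \<ge> 0"
      and P: "\<And>x. x > 0 \<Longrightarrow> p x > 0"
      and l0: "(w \<longlongrightarrow> 0) (at_right 0)" and li: "(w \<longlongrightarrow> 0) at_top"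
      and x0: "x0 > 0"
  shows "w x0 \<le> 0"
proof (rule ccontr)
  assume "\<not> w x0 \<le> 0"
  then have v: "w x0 > 0" by simp
  have "eventually (\<lambda>x. w x < w x0) (at_right 0)" using order_tendstoD(2)[OF l0 v] .
  then obtain a where a: "a > 0" "\<And>y. y > 0 \<Longrightarrow> y < a \<Longrightarrow> w y < w x0"
    unfolding eventually_at_right_field by auto
  have "eventually (\<lambda>x. w x < w x0) at_top" using order_tendstoD(2)[OF li v] .
  then obtain b where b: "\<And>y. y \<ge> b \<Longrightarrow> w y < w x0"
    unfolding eventually_at_top_linorder by auto
  define a' where "a' = min (a/2) (x0/2)"
  define b' where "b' = max b (x0 + 1)"
  have a'pos: "a' > 0" "a' < x0" "a' < a" using a x0 by (auto simp: a'_def)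
  have b'p: "b' > x0" "b' \<ge> b" by (auto simp: b'_def)
  have wa: "w a' < w x0" using a a'pos by auto
  have wb: "w b' < w x0" using b b'p by auto
  have cont: "continuous_on {a'..b'} w"
  proof (rule continuous_at_imp_continuous_on, rule ballI)
    fix x assume "x \<in> {a'..b'}"
    then have "x > 0" using a'pos by auto
    then show "isCont w x" using d1 DERIV_isCont by blast
  qed
  obtain z where z: "z \<in> {a'..b'}" "\<And>y. y \<in> {a'..b'} \<Longrightarrow> w y \<le> w z"
    using continuous_attains_sup[OF compact_Icc _ cont] a'pos b'p by fastforce
  have wz: "w z \<ge> w x0" using z a'pos b'p by auto
  have zpos: "z > 0" using z a'pos by auto
  have glob: "w y \<le> w z" if "y > 0" for y
  proof (cases "y < a'")
    case True
    then have "w y < w x0" using a(2)[OF that] a'pos by simp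
    then show ?thesis using wz by simp
  next
    case False
    show ?thesis
    proof (cases "y > b'")
      case True
      then have "w y < w x0" using b b'p by simp
      then show ?thesis using wz by simp
    next
      case False2: False
      then show ?thesis using z False by auto
    qed
  qed
  have wdz: "wd z = 0"
  proof (rule DERIV_local_max[OF d1[OF zpos] zpos])
    show "\<forall>y. \<bar>z - y\<bar> < z \<longrightarrow> w y \<le> w z" using glob by auto
  qed
  have "p z * w z > 0" using P[OF zpos] wz v by simp
  then have "z^2 * wdd z > 0" using L[OF zpos] wdz by simp
  then have wddz: "wdd z > 0" using zpos by (simp add: zero_less_mult_iff)
  obtain d where d: "d > 0" "\<And>h. h > 0 \<Longrightarrow> h < d \<Longrightarrow> wd z < wd (z + h)"
    using DERIV_pos_inc_right[OF d2[OF zpos] wddz] by auto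
  define h where "h = d/2"
  have h: "h > 0" "h < d" using d by (auto simp: h_def)
  obtain \<xi> where xi: "z < \<xi>" "\<xi> < z + h" "w (z + h) - w z = (z + h - z) * wd \<xi>"
    using MVT2[of z "z+h" w wd] h d1 zpos by auto
  have "wd \<xi> > 0" using d(2)[of "\<xi> - z"] xi h wdz by auto
  then have "h * wd \<xi> > 0" using h(1) by simp
  then have "w (z + h) > w z" using xi(3) by simp
  moreover have "w (z + h) \<le> w z" using glob zpos h by auto
  ultimately show False by simp
qed



definition Y0 :: "real \<Rightarrow> real \<Rightarrow> real" where "Y0 k x = x / (k^2 + x^2)"
definition Y1 :: "real \<Rightarrow> real \<Rightarrow> real" where "Y1 k x = (k^2 - x^2) / (k^2 + x^2)^2"
definition Y2 :: "real \<Rightarrow> real \<Rightarrow> real" where "Y2 k x = (2*x^3 - 6*k^2*x) / (k^2 + x^2)^3"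
definition sY :: "real \<Rightarrow> real \<Rightarrow> real" where "sY k x = 8*k^2*x^3 / (k^2 + x^2)^3"

lemma qpos: "k > 0 \<Longrightarrow> k^2 + x^2 > (0::real)"
  by (simp add: add_pos_nonneg)

lemma Y0_deriv: "k > 0 \<Longrightarrow> (Y0 k has_real_derivative Y1 k x) (at x)"
  unfolding Y0_def Y1_def
  apply (rule derivative_eq_intros refl | simp add: qpos[THEN less_imp_neq, symmetric])+
  using qpos[of k x] apply (simp add: field_simps power2_eq_square)
  done

lemma div_cancel_q: "(q::real) \<noteq> 0 \<Longrightarrow> N = M * q \<Longrightarrow> N / q^(Suc n) = M / q^n"
  by (simp add: field_simps)

lemma Y1_deriv: "k > 0 \<Longrightarrow> (Y1 k has_real_derivative Y2 k x) (at x)"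
proof -
  assume k: "k > 0"
  have q: "k^2 + x^2 \<noteq> 0" using qpos[OF k, where x=x] by linarith
  have e: "(- (2 * x * (k\<^sup>2 + x\<^sup>2)\<^sup>2) - (k\<^sup>2 - x\<^sup>2) * (4 * (x * (k\<^sup>2 + x\<^sup>2)))) / (k\<^sup>2 + x\<^sup>2) ^ Suc 3 =
     (2 * x ^ 3 - 6 * k\<^sup>2 * x) / (k\<^sup>2 + x\<^sup>2) ^ 3"
  proof (rule div_cancel_q[OF q])
    define q where "q = k^2 + x^2"
    have a: "- (2 * x * q) - (k\<^sup>2 - x\<^sup>2) * (4 * x) = 2 * x ^ 3 - 6 * k\<^sup>2 * x"
      by (simp add: q_def algebra_simps power2_eq_square power3_eq_cube)
    have "- (2 * x * q\<^sup>2) - (k\<^sup>2 - x\<^sup>2) * (4 * (x * q)) = (- (2 * x * q) - (k\<^sup>2 - x\<^sup>2) * (4 * x)) * q"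
      by (simp add: algebra_simps power2_eq_square)
    then show "- (2 * x * (k\<^sup>2 + x\<^sup>2)\<^sup>2) - (k\<^sup>2 - x\<^sup>2) * (4 * (x * (k\<^sup>2 + x\<^sup>2))) = (2 * x ^ 3 - 6 * k\<^sup>2 * x) * (k\<^sup>2 + x\<^sup>2)"
      using a by (simp add: q_def)
  qed
  show ?thesis
    unfolding Y1_def Y2_def
    apply (rule derivative_eq_intros refl | simp add: qpos[THEN less_imp_neq, symmetric])+
    using k e by (auto simp: numeral_eq_Suc)
qed

lemma Y_ode: "k > 0 \<Longrightarrow> x^2 * Y2 k x + x * Y1 k x - 4*(x^2 + k^2) * Y0 k x = -4*x + Y0 k x - sY k x"
proof -
  assume k: "k > 0"
  define q where "q = k^2 + x^2"
  have q: "q > 0" using qpos[OF k] by (simp add: q_def)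
  have xk: "x^2 + k^2 = q" by (simp add: q_def)
  have "x^2 * Y2 k x + x * Y1 k x - 4*(x^2 + k^2) * Y0 k x = (x^2 * (2*x^3 - 6*k^2*x) + x * (k^2 - x^2) * q - 4 * x * q^3) / q^3"
    unfolding Y0_def Y1_def Y2_def q_def[symmetric] xk using q
    by (simp add: field_simps power2_eq_square power3_eq_cube)
  also have "x^2 * (2*x^3 - 6*k^2*x) + x * (k^2 - x^2) * q = x * q^2 - 8*k^2*x^3"
    by (simp add: q_def algebra_simps power2_eq_square power3_eq_cube)
  also have "(x * q^2 - 8*k^2*x^3 - 4 * x * q^3) / q^3 = -4*x + Y0 k x - sY k x"
    unfolding Y0_def sY_def q_def[symmetric] using q
    by (simp add: field_simps power2_eq_square power3_eq_cube)
  finally show ?thesis .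
qed

lemma cancel23: "(q::real) \<noteq> 0 \<Longrightarrow> a * q^2 / q^3 = a / q"
  by (simp add: power2_eq_square power3_eq_cube)

lemma sY_bounds: "k > 0 \<Longrightarrow> x > 0 \<Longrightarrow> 0 \<le> sY k x \<and> sY k x \<le> 2 * x / (k^2 + x^2)"
proof -
  assume k: "k > 0" and x: "x > 0"
  have q: "k^2 + x^2 > 0" using qpos[OF k] .
  have "4*k^2*x^2 \<le> (k^2+x^2)^2" using sum_power2_ge_zero[of "k^2 - x^2" 0]
    by (simp add: power2_eq_square algebra_simps)
  then have "2*x*(4*k^2*x^2) \<le> 2*x*(k^2+x^2)^2" using x by (intro mult_left_mono) auto
  moreover have "2*x*(4*k^2*x^2) = 8*k^2*x^3" by (simp add: power2_eq_square power3_eq_cube)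
  ultimately have "8*k^2*x^3 \<le> 2*x*(k^2+x^2)^2" by simp
  then have "8*k^2*x^3 / (k^2 + x^2)^3 \<le> 2*x*(k^2+x^2)^2 / (k^2 + x^2)^3"
    using q by (simp add: divide_right_mono)
  also have "\<dots> = 2 * x / (k^2 + x^2)" by (rule cancel23) (use q in linarith)
  finally show ?thesis unfolding sY_def using k x q by simp
qed

lemma Y0_lim0: "k > 0 \<Longrightarrow> (Y0 k \<longlongrightarrow> 0) (at_right 0)"
proof -
  assume k: "k > 0"
  have "isCont (Y0 k) 0" using Y0_deriv[OF k] DERIV_isCont by blast
  then have "(Y0 k \<longlongrightarrow> Y0 k 0) (at 0)" by (simp add: isCont_def)
  then show ?thesis using filterlim_at_split by (force simp: Y0_def)
qed

lemma Y0_limi: "k > 0 \<Longrightarrow> (Y0 k \<longlongrightarrow> 0) at_top"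
proof (rule Lim_null_comparison)
  assume k: "k > 0"
  show "\<forall>\<^sub>F x in at_top. norm (Y0 k x) \<le> 1/x"
    using eventually_gt_at_top[of 0]
  proof eventually_elim
    case (elim x)
    have "x / (k^2 + x^2) \<le> x / x^2" using elim k
      by (intro divide_left_mono) (auto simp: add_pos_nonneg)
    also have "\<dots> = 1/x" by (simp add: power2_eq_square)
    finally show ?case using elim k by (simp add: Y0_def add_pos_nonneg)
  qed
  have "((\<lambda>x::real. inverse x) \<longlongrightarrow> 0) at_top" by (rule tendsto_inverse_0_at_top[OF filterlim_ident])
  then show "((\<lambda>x::real. 1/x) \<longlongrightarrow> 0) at_top" by (simp add: inverse_eq_divide)
qed



lemma Y0_le: "k \<ge> 1 \<Longrightarrow> x > 0 \<Longrightarrow> 0 \<le> Y0 k x \<and> Y0 k x \<le> x"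
proof -
  assume k: "k \<ge> 1" and x: "x > 0"
  have q: "k^2 + x^2 \<ge> 1" using k by (smt (verit) one_le_power zero_le_power2)
  have "x / (k^2 + x^2) \<le> x / 1" using q x by (intro divide_left_mono) auto
  then show ?thesis using x q by (simp add: Y0_def)
qed

lemma sY_le: "k > 0 \<Longrightarrow> x > 0 \<Longrightarrow> 0 \<le> sY k x \<and> sY k x \<le> 2 * Y0 k x"
  using sY_bounds[of k x] by (simp add: Y0_def)

lemma c_lower:
  assumes k: "k \<ge> 1" and x: "x > 0"
  shows "(3/4) * Y0 (real k) x \<le> cc k x"
proof -
  have kp: "real k > 0" using k by simp
  have "(\<lambda>x. (3/4) * Y0 (real k) x - cc k x) x \<le> 0"
  proof (rule max_principle[where w = "\<lambda>x. (3/4) * Y0 (real k) x - cc k x" and wd = "\<lambda>x. (3/4) * Y1 (real k) x - c1 k x"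
       and wdd = "\<lambda>x. (3/4) * Y2 (real k) x - c2 k x" and p = "\<lambda>x. 4*(x^2 + (real k)^2)"])
    fix x :: real assume x: "x > 0"
    show "((\<lambda>x. (3/4) * Y0 (real k) x - cc k x) has_real_derivative (3/4) * Y1 (real k) x - c1 k x) (at x)"
      by (intro DERIV_diff DERIV_cmult Y0_deriv kp cc_deriv)
    show "((\<lambda>x. (3/4) * Y1 (real k) x - c1 k x) has_real_derivative (3/4) * Y2 (real k) x - c2 k x) (at x)"
      by (intro DERIV_diff DERIV_cmult Y1_deriv kp c1_deriv)
    show "4*(x^2 + (real k)^2) > 0" using kp by (intro mult_pos_pos add_nonneg_pos) auto
    have E: "x^2 * ((3/4) * Y2 (real k) x - c2 k x) + x * ((3/4) * Y1 (real k) x - c1 k x) - 4*(x^2 + (real k)^2) * ((3/4) * Y0 (real k) x - cc k x)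
      = (3/4) * (x^2 * Y2 (real k) x + x * Y1 (real k) x - 4*(x^2 + (real k)^2) * Y0 (real k) x) - (x^2 * c2 k x + x * c1 k x - 4*(x^2 + (real k)^2) * cc k x)"
      by (simp add: algebra_simps)
    have EQ: "x^2 * ((3/4) * Y2 (real k) x - c2 k x) + x * ((3/4) * Y1 (real k) x - c1 k x) - 4*(x^2 + (real k)^2) * ((3/4) * Y0 (real k) x - cc k x)
       = (3/4) * (-4*x + Y0 (real k) x - sY (real k) x) + 4 * x"
      unfolding E ode Y_ode[OF kp] by simp
    have "Y0 (real k) x \<le> x" "0 \<le> Y0 (real k) x" using Y0_le[of "real k" x] k x by auto
    moreover have "sY (real k) x \<le> 2 * Y0 (real k) x" using sY_le[OF kp x] by auto
    ultimately show "x^2 * ((3/4) * Y2 (real k) x - c2 k x) + x * ((3/4) * Y1 (real k) x - c1 k x) - 4*(x^2 + (real k)^2) * ((3/4) * Y0 (real k) x - cc k x) \<ge> 0"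
      unfolding EQ using x by (simp add: algebra_simps; linarith)
  next
    have "((\<lambda>x. (3/4) * Y0 (real k) x - cc k x) \<longlongrightarrow> (3/4) * 0 - 0) (at_right 0)"
      by (intro tendsto_intros Y0_lim0[OF kp] cc_lim0[OF k])
    then show "((\<lambda>x. (3/4) * Y0 (real k) x - cc k x) \<longlongrightarrow> 0) (at_right 0)" by simp
    have "((\<lambda>x. (3/4) * Y0 (real k) x - cc k x) \<longlongrightarrow> (3/4) * 0 - 0) at_top"
      by (intro tendsto_intros Y0_limi[OF kp] cc_liminf)
    then show "((\<lambda>x. (3/4) * Y0 (real k) x - cc k x) \<longlongrightarrow> 0) at_top" by simp
  qed (rule x)
  then show ?thesis by simp
qed

lemma c_upper:
  assumes k: "k \<ge> 1" and x: "x > 0"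
  shows "cc k x \<le> 2 * Y0 (real k) x"
proof -
  have kp: "real k > 0" using k by simp
  have "(\<lambda>x. cc k x - 2 * Y0 (real k) x) x \<le> 0"
  proof (rule max_principle[where w = "\<lambda>x. cc k x - 2 * Y0 (real k) x" and wd = "\<lambda>x. c1 k x - 2 * Y1 (real k) x"
       and wdd = "\<lambda>x. c2 k x - 2 * Y2 (real k) x" and p = "\<lambda>x. 4*(x^2 + (real k)^2)"])
    fix x :: real assume x: "x > 0"
    show "((\<lambda>x. cc k x - 2 * Y0 (real k) x) has_real_derivative c1 k x - 2 * Y1 (real k) x) (at x)"
      by (intro DERIV_diff DERIV_cmult Y0_deriv kp cc_deriv)
    show "((\<lambda>x. c1 k x - 2 * Y1 (real k) x) has_real_derivative c2 k x - 2 * Y2 (real k) x) (at x)"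
      by (intro DERIV_diff DERIV_cmult Y1_deriv kp c1_deriv)
    show "4*(x^2 + (real k)^2) > 0" using kp by (intro mult_pos_pos add_nonneg_pos) auto
    have E: "x^2 * (c2 k x - 2 * Y2 (real k) x) + x * (c1 k x - 2 * Y1 (real k) x) - 4*(x^2 + (real k)^2) * (cc k x - 2 * Y0 (real k) x)
      = (x^2 * c2 k x + x * c1 k x - 4*(x^2 + (real k)^2) * cc k x) - 2 * (x^2 * Y2 (real k) x + x * Y1 (real k) x - 4*(x^2 + (real k)^2) * Y0 (real k) x)"
      by (simp add: algebra_simps)
    have EQ: "x^2 * (c2 k x - 2 * Y2 (real k) x) + x * (c1 k x - 2 * Y1 (real k) x) - 4*(x^2 + (real k)^2) * (cc k x - 2 * Y0 (real k) x)
       = -4 * x - 2 * (-4*x + Y0 (real k) x - sY (real k) x)"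
      unfolding E ode Y_ode[OF kp] by simp
    have "Y0 (real k) x \<le> x" "0 \<le> Y0 (real k) x" using Y0_le[of "real k" x] k x by auto
    moreover have "0 \<le> sY (real k) x" using sY_le[OF kp x] by auto
    ultimately show "x^2 * (c2 k x - 2 * Y2 (real k) x) + x * (c1 k x - 2 * Y1 (real k) x) - 4*(x^2 + (real k)^2) * (cc k x - 2 * Y0 (real k) x) \<ge> 0"
      unfolding EQ using x by (simp add: algebra_simps; linarith)
  next
    show "((\<lambda>x. cc k x - 2 * Y0 (real k) x) \<longlongrightarrow> 0) (at_right 0)"
      using tendsto_diff[OF cc_lim0[OF k] tendsto_mult_right_zero[OF Y0_lim0[OF kp]]] by simp
    show "((\<lambda>x. cc k x - 2 * Y0 (real k) x) \<longlongrightarrow> 0) at_top"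
      using tendsto_diff[OF cc_liminf tendsto_mult_right_zero[OF Y0_limi[OF kp]]] by simp
  qed (rule x)
  then show ?thesis by simp
qed


lemma diff_frac_aux: "(A::real) \<noteq> 0 \<Longrightarrow> B \<noteq> 0 \<Longrightarrow> x/A - x/B = x*(B-A)/(A*B)"
  by (simp add: field_simps)

lemma key_ineq: "a \<ge> 1 \<Longrightarrow> x > 0 \<Longrightarrow> Y0 a x \<le> (4*a+1) * Y0 (a+1) x"
proof -
  assume a: "a \<ge> 1" and x: "x > 0"
  have A: "a^2 + x^2 > 0" using a by (simp add: add_pos_nonneg)
  have B: "(a+1)^2 + x^2 > 0" using a by (simp add: add_pos_nonneg)
  have "(a+1)^2 + x^2 \<le> (4*a+1) * (a^2 + x^2)"
  proof -
    have "(a+1)^2 \<le> (4*a+1) * a^2"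
    proof -
      have "(4*a+1) * a^2 - (a+1)^2 = 4*a^3 - 2*a - 1" by (simp add: algebra_simps power2_eq_square power3_eq_cube)
      moreover have "4*a^3 \<ge> 4*a" using a by (simp add: power3_eq_cube) (metis mult_left_mono mult.commute less_eq_real_def mult_1_right mult_mono order_trans zero_le_one)
      ultimately show ?thesis using a by linarith
    qed
    moreover have "x^2 \<le> (4*a+1) * x^2" using a by (simp add: algebra_simps)
    ultimately show ?thesis by (simp add: algebra_simps)
  qed
  then have "x * ((a+1)^2 + x^2) \<le> x * ((4*a+1) * (a^2 + x^2))" using x by (intro mult_left_mono) auto
  then have "x / (a^2 + x^2) \<le> x * (4*a+1) / ((a+1)^2 + x^2)"
    using A B x by (simp add: field_simps)
  then show ?thesis by (simp add: Y0_def mult.commute)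
qed

theorem proposition3p7:
  fixes x :: real and n :: nat
  assumes "x > 0" and "n \<ge> 1"
  shows "Im (phi n x - phi (n+1) x) = 0
    \<and> (1/2) * ((2*n+1)*x / ((n^2 + x^2) * ((n+1)^2 + x^2))) \<le> Re (phi n x - phi (n+1) x)
    \<and> Re (phi n x - phi (n+1) x) \<le> 4 * ((2*n+1)*x / ((n^2 + x^2) * ((n+1)^2 + x^2)))"
proof -
  define a where "a = real n"
  have a1: "a \<ge> 1" using assms(2) by (simp add: a_def)
  have ap: "a > 0" and bp: "a + 1 > 0" using a1 by auto
  have rn1: "real (n+1) = a + 1" by (simp add: a_def)
  define D where "D x = cc n x - cc (n+1) x" for x
  define T where "T x = Y0 a x - Y0 (a+1) x" for x
  have cl: "(3/4) * Y0 (a+1) y \<le> cc (n+1) y" if "y > 0" for y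
  proof -
    have "(3/4) * Y0 (real (n+1)) y \<le> cc (n+1) y" by (rule c_lower) (use that in auto)
    then show ?thesis by (simp only: rn1)
  qed
  have cu: "cc (n+1) y \<le> 2 * Y0 (a+1) y" if "y > 0" for y
  proof -
    have "cc (n+1) y \<le> 2 * Y0 (real (n+1)) y" by (rule c_upper) (use that in auto)
    then show ?thesis by (simp only: rn1)
  qed
  have oa: "y^2 * c2 n y + y * c1 n y - 4*(y^2 + a^2) * cc n y = -4*y" for y
    using ode[of y n] by (simp add: a_def)
  have ob: "y^2 * c2 (n+1) y + y * c1 (n+1) y - 4*(y^2 + (a+1)^2) * cc (n+1) y = -4*y" for y
    using ode[of y "n+1"] by (simp only: rn1)
  have ya: "y^2 * Y2 a y + y * Y1 a y - 4*(y^2 + a^2) * Y0 a y = -4*y + Y0 a y - sY a y" for y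
    by (rule Y_ode[OF ap])
  have yb: "y^2 * Y2 (a+1) y + y * Y1 (a+1) y - 4*(y^2 + (a+1)^2) * Y0 (a+1) y = -4*y + Y0 (a+1) y - sY (a+1) y" for y
    by (rule Y_ode[OF bp])
  have lim0: "(T \<longlongrightarrow> 0) (at_right 0)" "(D \<longlongrightarrow> 0) (at_right 0)"
  proof -
    have "(T \<longlongrightarrow> 0 - 0) (at_right 0)" unfolding T_def by (intro tendsto_intros Y0_lim0 ap bp)
    then show "(T \<longlongrightarrow> 0) (at_right 0)" by simp
    have "(D \<longlongrightarrow> 0 - 0) (at_right 0)" unfolding D_def using assms(2) by (intro tendsto_intros cc_lim0) auto
    then show "(D \<longlongrightarrow> 0) (at_right 0)" by simp
  qed
  have limi: "(T \<longlongrightarrow> 0) at_top" "(D \<longlongrightarrow> 0) at_top"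
  proof -
    have "(T \<longlongrightarrow> 0 - 0) at_top" unfolding T_def by (intro tendsto_intros Y0_limi ap bp)
    then show "(T \<longlongrightarrow> 0) at_top" by simp
    have "(D \<longlongrightarrow> 0 - 0) at_top" unfolding D_def by (intro tendsto_intros cc_liminf)
    then show "(D \<longlongrightarrow> 0) at_top" by simp
  qed
  have dT: "(T has_real_derivative (Y1 a y - Y1 (a+1) y)) (at y)" for y
    unfolding T_def by (intro DERIV_diff Y0_deriv ap bp)
  have dT1: "((\<lambda>y. Y1 a y - Y1 (a+1) y) has_real_derivative (Y2 a y - Y2 (a+1) y)) (at y)" for y
    by (intro DERIV_diff Y1_deriv ap bp)
  have dD: "(D has_real_derivative (c1 n y - c1 (n+1) y)) (at y)" for y
    unfolding D_def by (intro DERIV_diff cc_deriv)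
  have dD1: "((\<lambda>y. c1 n y - c1 (n+1) y) has_real_derivative (c2 n y - c2 (n+1) y)) (at y)" for y
    by (intro DERIV_diff c1_deriv)
  have pp: "4*(y^2 + a^2) > 0" for y using ap by (intro mult_pos_pos add_nonneg_pos) auto
  have lower: "(1/2) * T x - D x \<le> 0"
  proof (rule max_principle[where w = "\<lambda>y. (1/2) * T y - D y" and wd = "\<lambda>y. (1/2) * (Y1 a y - Y1 (a+1) y) - (c1 n y - c1 (n+1) y)"
       and wdd = "\<lambda>y. (1/2) * (Y2 a y - Y2 (a+1) y) - (c2 n y - c2 (n+1) y)" and p = "\<lambda>y. 4*(y^2 + a^2)"])
    fix y :: real assume y: "y > 0"
    show "((\<lambda>y. (1/2) * T y - D y) has_real_derivative (1/2) * (Y1 a y - Y1 (a+1) y) - (c1 n y - c1 (n+1) y)) (at y)"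
      by (intro DERIV_diff DERIV_cmult dT dD)
    show "((\<lambda>y. (1/2) * (Y1 a y - Y1 (a+1) y) - (c1 n y - c1 (n+1) y)) has_real_derivative (1/2) * (Y2 a y - Y2 (a+1) y) - (c2 n y - c2 (n+1) y)) (at y)"
      by (intro DERIV_diff DERIV_cmult dT1 dD1)
    show "4*(y^2 + a^2) > 0" by (rule pp)
    have EQ0: "y^2 * ((1/2) * (Y2 a y - Y2 (a+1) y) - (c2 n y - c2 (n+1) y)) + y * ((1/2) * (Y1 a y - Y1 (a+1) y) - (c1 n y - c1 (n+1) y))
        - 4*(y^2 + a^2) * ((1/2) * T y - D y)
      = (1/2) * (y^2 * Y2 a y + y * Y1 a y - 4*(y^2 + a^2) * Y0 a y)
        - (1/2) * ((y^2 * Y2 (a+1) y + y * Y1 (a+1) y - 4*(y^2 + (a+1)^2) * Y0 (a+1) y) + 4*(2*a+1) * Y0 (a+1) y)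
        - (y^2 * c2 n y + y * c1 n y - 4*(y^2 + a^2) * cc n y)
        + ((y^2 * c2 (n+1) y + y * c1 (n+1) y - 4*(y^2 + (a+1)^2) * cc (n+1) y) + 4*(2*a+1) * cc (n+1) y)"
      by (simp add: T_def D_def algebra_simps power2_eq_square)
    have EQ: "y^2 * ((1/2) * (Y2 a y - Y2 (a+1) y) - (c2 n y - c2 (n+1) y)) + y * ((1/2) * (Y1 a y - Y1 (a+1) y) - (c1 n y - c1 (n+1) y))
        - 4*(y^2 + a^2) * ((1/2) * T y - D y)
      = (1/2) * (-4*y + Y0 a y - sY a y) - (1/2) * ((-4*y + Y0 (a+1) y - sY (a+1) y) + 4*(2*a+1) * Y0 (a+1) y)
        - (-4*y) + (-4*y + 4*(2*a+1) * cc (n+1) y)"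
      unfolding EQ0 ya yb oa ob by simp
    have f1: "(2*a+1) * ((3/4) * Y0 (a+1) y) \<le> (2*a+1) * cc (n+1) y"
      using cl[OF y] ap by (intro mult_left_mono) auto
    have f2: "Y0 a y \<le> (4*a+1) * Y0 (a+1) y" by (rule key_ineq[OF a1 y])
    have f3: "sY a y \<le> 2 * Y0 a y" "0 \<le> sY (a+1) y" using sY_le[OF ap y] sY_le[OF bp y] by auto
    show "y^2 * ((1/2) * (Y2 a y - Y2 (a+1) y) - (c2 n y - c2 (n+1) y)) + y * ((1/2) * (Y1 a y - Y1 (a+1) y) - (c1 n y - c1 (n+1) y))
        - 4*(y^2 + a^2) * ((1/2) * T y - D y) \<ge> 0"
      unfolding EQ using f1 f2 f3 by (simp add: algebra_simps; linarith)
  next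
    show "((\<lambda>y. (1/2) * T y - D y) \<longlongrightarrow> 0) (at_right 0)"
      using tendsto_diff[OF tendsto_mult_right_zero[OF lim0(1)] lim0(2), of "1/2"] by simp
    show "((\<lambda>y. (1/2) * T y - D y) \<longlongrightarrow> 0) at_top"
      using tendsto_diff[OF tendsto_mult_right_zero[OF limi(1)] limi(2), of "1/2"] by simp
  qed (rule assms(1))
  have upper: "D x - 4 * T x \<le> 0"
  proof (rule max_principle[where w = "\<lambda>y. D y - 4 * T y" and wd = "\<lambda>y. (c1 n y - c1 (n+1) y) - 4 * (Y1 a y - Y1 (a+1) y)"
       and wdd = "\<lambda>y. (c2 n y - c2 (n+1) y) - 4 * (Y2 a y - Y2 (a+1) y)" and p = "\<lambda>y. 4*(y^2 + a^2)"])
    fix y :: real assume y: "y > 0"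
    show "((\<lambda>y. D y - 4 * T y) has_real_derivative (c1 n y - c1 (n+1) y) - 4 * (Y1 a y - Y1 (a+1) y)) (at y)"
      by (intro DERIV_diff DERIV_cmult dT dD)
    show "((\<lambda>y. (c1 n y - c1 (n+1) y) - 4 * (Y1 a y - Y1 (a+1) y)) has_real_derivative (c2 n y - c2 (n+1) y) - 4 * (Y2 a y - Y2 (a+1) y)) (at y)"
      by (intro DERIV_diff DERIV_cmult dT1 dD1)
    show "4*(y^2 + a^2) > 0" by (rule pp)
    have EQ0: "y^2 * ((c2 n y - c2 (n+1) y) - 4 * (Y2 a y - Y2 (a+1) y)) + y * ((c1 n y - c1 (n+1) y) - 4 * (Y1 a y - Y1 (a+1) y))
        - 4*(y^2 + a^2) * (D y - 4 * T y)
      = (y^2 * c2 n y + y * c1 n y - 4*(y^2 + a^2) * cc n y)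
        - ((y^2 * c2 (n+1) y + y * c1 (n+1) y - 4*(y^2 + (a+1)^2) * cc (n+1) y) + 4*(2*a+1) * cc (n+1) y)
        - 4 * (y^2 * Y2 a y + y * Y1 a y - 4*(y^2 + a^2) * Y0 a y)
        + 4 * ((y^2 * Y2 (a+1) y + y * Y1 (a+1) y - 4*(y^2 + (a+1)^2) * Y0 (a+1) y) + 4*(2*a+1) * Y0 (a+1) y)"
      by (simp add: T_def D_def algebra_simps power2_eq_square)
    have EQ: "y^2 * ((c2 n y - c2 (n+1) y) - 4 * (Y2 a y - Y2 (a+1) y)) + y * ((c1 n y - c1 (n+1) y) - 4 * (Y1 a y - Y1 (a+1) y))
        - 4*(y^2 + a^2) * (D y - 4 * T y)
      = (-4*y) - ((-4*y) + 4*(2*a+1) * cc (n+1) y)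
        - 4 * (-4*y + Y0 a y - sY a y)
        + 4 * ((-4*y + Y0 (a+1) y - sY (a+1) y) + 4*(2*a+1) * Y0 (a+1) y)"
      unfolding EQ0 ya yb oa ob by simp
    have f1: "(2*a+1) * cc (n+1) y \<le> (2*a+1) * (2 * Y0 (a+1) y)"
      using cu[OF y] ap by (intro mult_left_mono) auto
    have f2: "Y0 a y \<le> (4*a+1) * Y0 (a+1) y" by (rule key_ineq[OF a1 y])
    have f3: "0 \<le> sY a y" "sY (a+1) y \<le> 2 * Y0 (a+1) y" using sY_le[OF ap y] sY_le[OF bp y] by auto
    show "y^2 * ((c2 n y - c2 (n+1) y) - 4 * (Y2 a y - Y2 (a+1) y)) + y * ((c1 n y - c1 (n+1) y) - 4 * (Y1 a y - Y1 (a+1) y))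
        - 4*(y^2 + a^2) * (D y - 4 * T y) \<ge> 0"
      unfolding EQ using f1 f2 f3 by (simp add: algebra_simps; linarith)
  next
    show "((\<lambda>y. D y - 4 * T y) \<longlongrightarrow> 0) (at_right 0)"
      using tendsto_diff[OF lim0(2) tendsto_mult_right_zero[OF lim0(1)], of 4] by simp
    show "((\<lambda>y. D y - 4 * T y) \<longlongrightarrow> 0) at_top"
      using tendsto_diff[OF limi(2) tendsto_mult_right_zero[OF limi(1)], of 4] by simp
  qed (rule assms(1))
  have Tform: "(2*n+1)*x / ((n^2 + x^2) * ((n+1)^2 + x^2)) = T x"
  proof -
    have A: "a^2 + x^2 > 0" using ap by (simp add: add_pos_nonneg)
    have B: "(a+1)^2 + x^2 > 0" using bp by (simp add: add_pos_nonneg)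
    have "T x = x / (a^2 + x^2) - x / ((a+1)^2 + x^2)" by (simp add: T_def Y0_def)
    also have "\<dots> = x * (((a+1)^2 + x^2) - (a^2 + x^2)) / ((a^2 + x^2) * ((a+1)^2 + x^2))"
      by (rule diff_frac_aux) (use A B in linarith)+
    also have "((a+1)^2 + x^2) - (a^2 + x^2) = 2*a+1" by (simp add: power2_eq_square algebra_simps)
    also have "x * (2*a+1) = (2*a+1)*x" by simp
    finally show ?thesis by (simp add: a_def ac_simps)
  qed
  have Dform: "phi n x - phi (n+1) x = complex_of_real (D x)" by (simp add: phi_eq D_def)
  show ?thesis unfolding Dform Tform using lower upper by simp
qed


end
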